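(* Let $\alpha=(\alpha_1,\dots,\alpha_t)\in\mathcal{P}(n)$, let $\alpha^*=(\gamma_1,\dots,\gamma_s)$ be its conjugate (so $s=\alpha_1$), let $\delta(\alpha)=(d_k)_{k\ge1}$, and let $r=t+s-1$. Then \[s(\alpha)+s(\alpha^* )=2\sum_{k=1}^r k\,d_k.\] Consequently, if $\alpha,\beta\in\mathcal{P}(n)$ satisfy $\delta(\alpha)=\delta(\beta)$, then $s(\alpha)+s(\alpha^* )=s(\beta)+s(\beta^* )$.
   Context: A partition of a positive integer $n$ is a finite non-increasing sequence $\alpha=(\alpha_1,\dots,\alpha_t)$ of positive integers with sum $n$; $\mathcal{P}(n)$ is the set of partitions of $n$, and $\alpha_i=0$ for $i>t$. The diagonal sequence is $\delta(\alpha)=(d_k)_{k\ge1}$ with $d_k=|\{i:1\le i\le k,\ \alpha_i+i-1\ge k\}|$. The conjugate $\alpha^*$ has parts $\alpha^*_j=|\{i:\alpha_i\ge j\}|$. For a partition $\alpha=(\alpha_1,\dots,\alpha_t)$, $s(\alpha)=\sum_{i=1}^t\alpha_i^2$. *)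

theory Defs
  imports Main
begin

definition partitions :: "nat \<Rightarrow> nat list set" where
  "partitions n = {a. sorted_wrt (\<ge>) a \<and> (\<forall>x\<in>set a. 0 < x) \<and> sum_list a = n}"

text \<open>1-indexed part, with value 0 beyond the length.\<close>
definition part :: "nat list \<Rightarrow> nat \<Rightarrow> nat" where
  "part a i = (if 1 \<le> i \<and> i \<le> length a then a ! (i - 1) else 0)"

definition conj_part :: "nat list \<Rightarrow> nat list" where
  "conj_part a = map (\<lambda>j. card {i. 1 \<le> i \<and> i \<le> length a \<and> part a i \<ge> j}) [1..<part a 1 + 1]"

definition diag :: "nat list \<Rightarrow> nat \<Rightarrow> nat" where
  "diag a k = card {i. 1 \<le> i \<and> i \<le> k \<and> part a i + i - 1 \<ge> k}"

definition sq_sum :: "nat list \<Rightarrow> nat" where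
  "sq_sum a = (\<Sum>x\<leftarrow>a. x ^ 2)"

end

theory Submission
  imports Defs
begin

lemma two_sum_ivl0: "2 * (\<Sum>k\<in>{Suc j..<p+Suc j}. k) = p * (2*j+1) + p^2"
  by (induction p) (auto simp: power2_eq_square algebra_simps)

lemma two_sum_ivl: "1 \<le> (i::nat) \<Longrightarrow> 2 * (\<Sum>k\<in>{i..<p+i}. k) = p * (2*i-1) + p^2"
proof -
  assume "1 \<le> i"
  then obtain j where "i = Suc j" by (cases i) auto
  then show ?thesis using two_sum_ivl0[of j p] by simp
qed

lemma part_le_first:
  assumes "sorted_wrt (\<ge>) a" "1 \<le> i" "i \<le> i'"
  shows "part a i' \<le> part a i"
proof (cases "i' \<le> length a")
  case True
  show ?thesis
  proof (cases "i = i'")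
    case False
    then have "a ! (i' - 1) \<le> a ! (i - 1)"
      using assms True by (auto simp: sorted_wrt_iff_nth_less)
    then show ?thesis using assms True by (simp add: part_def)
  qed simp
qed (simp add: part_def)

lemma sq_sum_part: "sq_sum a = (\<Sum>i\<in>{1..length a}. part a i ^ 2)"
proof -
  have "sq_sum a = (\<Sum>i<length a. (a ! i)^2)"
    unfolding sq_sum_def by (simp add: sum_list_sum_nth atLeast0LessThan)
  also have "\<dots> = (\<Sum>i<length a. part a (Suc i) ^ 2)"
    by (rule sum.cong) (auto simp: part_def)
  also have "\<dots> = (\<Sum>i\<in>{1..length a}. part a i ^ 2)"
    by (simp add: sum.atLeast1_atMost_eq)
  finally show ?thesis .
qed

lemma down_closed_sum:
  assumes "finite S" "S \<subseteq> {1..}" "\<And>i i'. i' \<in> S \<Longrightarrow> 1 \<le> i \<Longrightarrow> i \<le> i' \<Longrightarrow> i \<in> S"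
  shows "(\<Sum>i\<in>S. 2*i-1) = card S ^ 2"
proof (cases "S = {}")
  case True then show ?thesis by simp
next
  case False
  define M where "M = Max S"
  have "S = {1..M}"
  proof
    show "S \<subseteq> {1..M}" using assms M_def by auto
    show "{1..M} \<subseteq> S"
    proof
      fix x assume "x \<in> {1..M}"
      then show "x \<in> S" using assms(3)[of M x] Max_in[OF assms(1) False] M_def by auto
    qed
  qed
  moreover have "(\<Sum>i\<in>{1..M}. 2*i-1) = M^2"
    by (induction M) (auto simp: power2_eq_square)
  ultimately show ?thesis by simp
qed

lemma conj_sum:
  assumes "sorted_wrt (\<ge>) a"
  shows "sq_sum (conj_part a) = (\<Sum>i\<in>{1..length a}. part a i * (2*i-1))"
proof -
  let ?t = "length a" and ?s = "part a 1"
  define S where "S j = {i. 1 \<le> i \<and> i \<le> ?t \<and> part a i \<ge> j}" for j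
  have le: "part a i \<le> ?s" if "1 \<le> i" for i using part_le_first[OF assms, of 1 i] that by simp
  have "sq_sum (conj_part a) = sum_list (map (\<lambda>j. card (S j) ^ 2) [1..<?s+1])"
    unfolding sq_sum_def conj_part_def S_def by (simp add: comp_def)
  also have "\<dots> = (\<Sum>j\<in>{1..?s}. card (S j) ^ 2)"
    by (simp only: sum_set_upt_conv_sum_list_nat[symmetric] set_upt Suc_eq_plus1[symmetric] atLeastLessThanSuc_atLeastAtMost)
  also have "\<dots> = (\<Sum>j\<in>{1..?s}. \<Sum>i\<in>S j. 2*i-1)"
  proof (rule sum.cong[OF refl], rule down_closed_sum[symmetric])
    fix j show "finite (S j)" unfolding S_def by auto
    show "S j \<subseteq> {1..}" unfolding S_def by auto
    fix i i' assume "i' \<in> S j" "1 \<le> i" "i \<le> i'"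
    then show "i \<in> S j" unfolding S_def using part_le_first[OF assms, of i i'] by auto
  qed
  also have "\<dots> = (\<Sum>j\<in>{1..?s}. \<Sum>i\<in>{1..?t}. if j \<le> part a i then 2*i-1 else 0)"
  proof (rule sum.cong[OF refl])
    fix j
    have "S j = {1..?t} \<inter> {i. j \<le> part a i}" unfolding S_def by auto
    then show "(\<Sum>i\<in>S j. 2*i-1) = (\<Sum>i\<in>{1..?t}. if j \<le> part a i then 2*i-1 else 0)"
      by (simp add: sum.If_cases)
  qed
  also have "\<dots> = (\<Sum>i\<in>{1..?t}. \<Sum>j\<in>{1..?s}. if j \<le> part a i then 2*i-1 else 0)"
    by (rule sum.swap)
  also have "\<dots> = (\<Sum>i\<in>{1..?t}. part a i * (2*i-1))"
  proof (rule sum.cong[OF refl])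
    fix i assume "i \<in> {1..?t}"
    then have "{1..?s} \<inter> {j. j \<le> part a i} = {1..part a i}" using le[of i] by auto
    then show "(\<Sum>j\<in>{1..?s}. if j \<le> part a i then 2*i-1 else 0) = part a i * (2*i-1)"
      by (simp add: sum.If_cases)
  qed
  finally show ?thesis .
qed

lemma diag_sum:
  assumes "\<And>i. 1 \<le> i \<Longrightarrow> i \<le> length a \<Longrightarrow> part a i + i - 1 \<le> N"
  shows "2 * (\<Sum>k=1..N. k * diag a k) = (\<Sum>i\<in>{1..length a}. part a i * (2*i-1) + part a i ^ 2)"
proof -
  let ?t = "length a"
  have "(\<Sum>k=1..N. k * diag a k) = (\<Sum>k\<in>{1..N}. \<Sum>i\<in>{1..?t}. if i \<le> k \<and> k < part a i + i then k else 0)"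
  proof (rule sum.cong[OF refl])
    fix k assume k: "k \<in> {1..N}"
    have "{i. 1 \<le> i \<and> i \<le> k \<and> part a i + i - 1 \<ge> k} = {1..?t} \<inter> {i. i \<le> k \<and> k < part a i + i}"
    proof (rule set_eqI)
      fix i
      show "i \<in> {i. 1 \<le> i \<and> i \<le> k \<and> part a i + i - 1 \<ge> k} \<longleftrightarrow> i \<in> {1..?t} \<inter> {i. i \<le> k \<and> k < part a i + i}"
      proof (cases "i \<le> ?t")
        case False
        then have "part a i = 0" by (simp add: part_def)
        then show ?thesis using False by auto
      qed auto
    qed
    then show "k * diag a k = (\<Sum>i\<in>{1..?t}. if i \<le> k \<and> k < part a i + i then k else 0)"
      unfolding diag_def by (simp add: sum.If_cases)
  qed
  also have "\<dots> = (\<Sum>i\<in>{1..?t}. \<Sum>k\<in>{1..N}. if i \<le> k \<and> k < part a i + i then k else 0)"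
    by (rule sum.swap)
  also have "\<dots> = (\<Sum>i\<in>{1..?t}. \<Sum>k\<in>{i..<part a i + i}. k)"
  proof (rule sum.cong[OF refl])
    fix i assume i: "i \<in> {1..?t}"
    have "{1..N} \<inter> {k. i \<le> k \<and> k < part a i + i} = {i..<part a i + i}"
      using i assms[of i] by auto
    then show "(\<Sum>k\<in>{1..N}. if i \<le> k \<and> k < part a i + i then k else 0) = (\<Sum>k\<in>{i..<part a i + i}. k)"
      by (simp add: sum.If_cases)
  qed
  finally have "2 * (\<Sum>k=1..N. k * diag a k) = (\<Sum>i\<in>{1..?t}. 2 * (\<Sum>k\<in>{i..<part a i + i}. k))"
    by (simp add: sum_distrib_left)
  also have "\<dots> = (\<Sum>i\<in>{1..length a}. part a i * (2*i-1) + part a i ^ 2)"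
    by (rule sum.cong[OF refl]) (simp add: two_sum_ivl)
  finally show ?thesis .
qed

lemma main_identity:
  assumes "sorted_wrt (\<ge>) a" "length a + length (conj_part a) - 1 \<le> N"
  shows "sq_sum a + sq_sum (conj_part a) = 2 * (\<Sum>k=1..N. k * diag a k)"
proof -
  have lc: "length (conj_part a) = part a 1" unfolding conj_part_def by simp
  have "part a i + i - 1 \<le> N" if "1 \<le> i" "i \<le> length a" for i
  proof -
    have "part a i \<le> part a 1" using part_le_first[OF assms(1), of 1 i] that by simp
    then show ?thesis using that assms(2) lc by linarith
  qed
  then have "2 * (\<Sum>k=1..N. k * diag a k) = (\<Sum>i\<in>{1..length a}. part a i * (2*i-1) + part a i ^ 2)"
    by (rule diag_sum)
  also have "\<dots> = (\<Sum>i\<in>{1..length a}. part a i * (2*i-1)) + (\<Sum>i\<in>{1..length a}. part a i ^ 2)"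
    by (rule sum.distrib)
  also have "\<dots> = sq_sum (conj_part a) + sq_sum a"
    by (simp only: sq_sum_part[of a] conj_sum[OF assms(1)])
  finally show ?thesis by simp
qed

theorem proposition2p9:
  fixes n :: nat and \<alpha> \<beta> :: "nat list"
  assumes "0 < n"
  shows "(\<alpha> \<in> partitions n \<longrightarrow>
           sq_sum \<alpha> + sq_sum (conj_part \<alpha>)
             = 2 * (\<Sum>k = 1..length \<alpha> + length (conj_part \<alpha>) - 1. k * diag \<alpha> k))
       \<and> (\<alpha> \<in> partitions n \<and> \<beta> \<in> partitions n \<and> (\<forall>k\<ge>1. diag \<alpha> k = diag \<beta> k) \<longrightarrow>
           sq_sum \<alpha> + sq_sum (conj_part \<alpha>) = sq_sum \<beta> + sq_sum (conj_part \<beta>))"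
proof (intro conjI impI)
  assume "\<alpha> \<in> partitions n"
  then have "sorted_wrt (\<ge>) \<alpha>" by (simp add: partitions_def)
  then show "sq_sum \<alpha> + sq_sum (conj_part \<alpha>)
             = 2 * (\<Sum>k = 1..length \<alpha> + length (conj_part \<alpha>) - 1. k * diag \<alpha> k)"
    by (rule main_identity) (rule order_refl)
next
  assume h: "\<alpha> \<in> partitions n \<and> \<beta> \<in> partitions n \<and> (\<forall>k\<ge>1. diag \<alpha> k = diag \<beta> k)"
  have sa: "sorted_wrt (\<ge>) \<alpha>" and sb: "sorted_wrt (\<ge>) \<beta>" using h by (simp_all add: partitions_def)
  define N where "N = max (length \<alpha> + length (conj_part \<alpha>) - 1) (length \<beta> + length (conj_part \<beta>) - 1)"
  have "sq_sum \<alpha> + sq_sum (conj_part \<alpha>) = 2 * (\<Sum>k=1..N. k * diag \<alpha> k)"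
    using sa by (rule main_identity) (simp add: N_def)
  also have "(\<Sum>k=1..N. k * diag \<alpha> k) = (\<Sum>k=1..N. k * diag \<beta> k)"
    by (rule sum.cong[OF refl]) (use h in auto)
  also have "2 * (\<Sum>k=1..N. k * diag \<beta> k) = sq_sum \<beta> + sq_sum (conj_part \<beta>)"
    using sb by (rule main_identity[symmetric]) (simp add: N_def)
  finally show "sq_sum \<alpha> + sq_sum (conj_part \<alpha>) = sq_sum \<beta> + sq_sum (conj_part \<beta>)" .
qed

end
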